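(* Let $M$ be a smooth manifold and let $\gamma:[a,b]\to M$ be a tree-like path that is piecewise smoothly immersed. Then $\gamma$ is retraceable, i.e. retrace equivalent to a constant path.
   Context: A path $\gamma:[a,b]\to M$ is tree-like if there exist an $\mathbb{R}$-tree $T$ and continuous maps $\phi:[a,b]\to T$ and $\psi:T\to M$ with $\gamma=\psi\circ\phi$ and $\phi(a)=\phi(b)$. A path is piecewise smoothly immersed if it is a finite concatenation of smooth immersions. Paths are considered up to reparametrization and collapsing of constant subpaths; the retrace relation is the equivalence relation finitely generated by $\alpha aa^{-1}\beta\sim\alpha\beta$, where $a^{-1}(t)=a(1-t)$ and juxtaposition is concatenation. *)

theory Defs
  imports "HOL-Analysis.Analysis"
begin

coinductive smooth_on :: "'a::euclidean_space set \<Rightarrow> ('a \<Rightarrow> 'b::real_normed_vector) \<Rightarrow> bool"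
  for S where
  "f differentiable_on S \<Longrightarrow>
   (\<forall>v\<in>Basis. smooth_on S (\<lambda>x. frechet_derivative f (at x) v)) \<Longrightarrow>
   smooth_on S f"

definition smooth_manifold :: "'m::topological_space set \<Rightarrow> (('m \<Rightarrow> 'e::euclidean_space) \<times> 'm set) set \<Rightarrow> bool" where
  "smooth_manifold M A \<longleftrightarrow>
     Hausdorff_space (top_of_set M) \<and>
     second_countable (top_of_set M) \<and>
     (\<forall>(\<phi>, U)\<in>A. openin (top_of_set M) U \<and> open (\<phi> ` U) \<and>
                  homeomorphic_map (top_of_set U) (top_of_set (\<phi> ` U)) \<phi>) \<and>
     M \<subseteq> (\<Union>(\<phi>, U)\<in>A. U) \<and>
     (\<forall>(\<phi>, U)\<in>A. \<forall>(\<psi>, V)\<in>A.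
        smooth_on (\<phi> ` (U \<inter> V)) (\<psi> \<circ> inv_into U \<phi>))"

definition smooth_immersion_on ::
  "'m::topological_space set \<Rightarrow> (('m \<Rightarrow> 'e::euclidean_space) \<times> 'm set) set \<Rightarrow> real \<Rightarrow> real \<Rightarrow> (real \<Rightarrow> 'm) \<Rightarrow> bool" where
  "smooth_immersion_on M A s t c \<longleftrightarrow>
     s < t \<and>
     (\<exists>\<epsilon>>0. \<exists>c'. continuous_on {s-\<epsilon><..<t+\<epsilon>} c' \<and> c' ` {s-\<epsilon><..<t+\<epsilon>} \<subseteq> M \<and>
        (\<forall>x\<in>{s..t}. c' x = c x) \<and>
        (\<forall>(\<phi>, U)\<in>A.
           let S = {x\<in>{s-\<epsilon><..<t+\<epsilon>}. c' x \<in> U} in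
           smooth_on S (\<phi> \<circ> c') \<and>
           (\<forall>x\<in>S. vector_derivative (\<phi> \<circ> c') (at x) \<noteq> 0)))"

definition piecewise_smooth_immersion ::
  "'m::topological_space set \<Rightarrow> (('m \<Rightarrow> 'e::euclidean_space) \<times> 'm set) set \<Rightarrow> real \<Rightarrow> real \<Rightarrow> (real \<Rightarrow> 'm) \<Rightarrow> bool" where
  "piecewise_smooth_immersion M A a b \<gamma> \<longleftrightarrow>
     (\<exists>k::nat. \<exists>t::nat \<Rightarrow> real. k \<ge> 1 \<and> t 0 = a \<and> t k = b \<and>
        (\<forall>i<k. t i < t (Suc i) \<and> smooth_immersion_on M A (t i) (t (Suc i)) \<gamma>))"

definition is_rtree :: "'a::metric_space set \<Rightarrow> bool" where
  "is_rtree T \<longleftrightarrow>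
     (\<forall>x\<in>T. \<forall>y\<in>T. \<exists>h. h ` {0..dist x y} \<subseteq> T \<and> h 0 = x \<and> h (dist x y) = y \<and>
        (\<forall>s\<in>{0..dist x y}. \<forall>u\<in>{0..dist x y}. dist (h s) (h u) = \<bar>s - u\<bar>)) \<and>
     (\<forall>g h. arc g \<and> arc h \<and> path_image g \<subseteq> T \<and> path_image h \<subseteq> T \<and>
        pathstart g = pathstart h \<and> pathfinish g = pathfinish h \<longrightarrow>
        path_image g = path_image h)"

text \<open>Tree-like with respect to a given R-tree T (living in the metric type 'a).
The existential over the R-tree becomes a universally quantified type variable
in the theorem.\<close>

definition tree_like_via :: "'a::metric_space set \<Rightarrow> 'm::topological_space set \<Rightarrow> real \<Rightarrow> real \<Rightarrow> (real \<Rightarrow> 'm) \<Rightarrow> bool" where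
  "tree_like_via T M a b \<gamma> \<longleftrightarrow> is_rtree T \<and>
     (\<exists>\<phi> \<psi>. continuous_on {a..b} \<phi> \<and> \<phi> ` {a..b} \<subseteq> T \<and>
            continuous_on T \<psi> \<and> \<psi> ` T \<subseteq> M \<and>
            (\<forall>t\<in>{a..b}. \<gamma> t = \<psi> (\<phi> t)) \<and> \<phi> a = \<phi> b)"

text \<open>Two paths are elementarily equivalent if both are reparametrisations of a
common path by nondecreasing continuous surjections of [0,1] (this covers
reparametrisation and collapsing/inserting constant subpaths).\<close>

definition reparam_of :: "(real \<Rightarrow> 'm::topological_space) \<Rightarrow> (real \<Rightarrow> 'm) \<Rightarrow> bool" where
  "reparam_of p q \<longleftrightarrow> (\<exists>\<sigma>. continuous_on {0..1} \<sigma> \<and> \<sigma> ` {0..1} = {0..1} \<and>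
      mono_on {0..1} \<sigma> \<and> (\<forall>t\<in>{0..1}. p t = q (\<sigma> t)))"

definition path_equiv :: "'m::topological_space set \<Rightarrow> (real \<Rightarrow> 'm) \<Rightarrow> (real \<Rightarrow> 'm) \<Rightarrow> bool" where
  "path_equiv M = (\<lambda>p q. path p \<and> path_image p \<subseteq> M \<and> path q \<and> path_image q \<subseteq> M \<and>
      (\<exists>r. path r \<and> path_image r \<subseteq> M \<and> reparam_of p r \<and> reparam_of q r))\<^sup>*\<^sup>*"

definition retrace_step :: "'m::topological_space set \<Rightarrow> (real \<Rightarrow> 'm) \<Rightarrow> (real \<Rightarrow> 'm) \<Rightarrow> bool" where
  "retrace_step M p q \<longleftrightarrow>
     (\<exists>\<alpha> c \<beta>. path \<alpha> \<and> path c \<and> path \<beta> \<and>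
        path_image \<alpha> \<subseteq> M \<and> path_image c \<subseteq> M \<and> path_image \<beta> \<subseteq> M \<and>
        pathfinish \<alpha> = pathstart c \<and> pathstart \<beta> = pathstart c \<and>
        path_equiv M p (\<alpha> +++ (c +++ (reversepath c +++ \<beta>))) \<and>
        path_equiv M q (\<alpha> +++ \<beta>))"

definition retrace_equiv :: "'m::topological_space set \<Rightarrow> (real \<Rightarrow> 'm) \<Rightarrow> (real \<Rightarrow> 'm) \<Rightarrow> bool" where
  "retrace_equiv M = (\<lambda>p q. path_equiv M p q \<or> retrace_step M p q \<or> retrace_step M q p)\<^sup>*\<^sup>*"

definition retraceable :: "'m::topological_space set \<Rightarrow> real \<Rightarrow> real \<Rightarrow> (real \<Rightarrow> 'm) \<Rightarrow> bool" where
  "retraceable M a b \<gamma> \<longleftrightarrow>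
     (\<exists>x\<in>M. retrace_equiv M (\<lambda>t. \<gamma> (a + t * (b - a))) (\<lambda>t. x))"

end

theory Submission
  imports Defs
begin

definition spath :: "real \<Rightarrow> real \<Rightarrow> (real \<Rightarrow> 'a) \<Rightarrow> real \<Rightarrow> 'a" where
  "spath u v g = (\<lambda>x. g ((v - u) * x + u))"

lemma spath_trivial [simp]: "spath 0 1 g = g"
  by (simp add: spath_def)

lemma pathstart_spath [simp]: "pathstart (spath u v g) = g u"
  by (simp add: spath_def pathstart_def)

lemma pathfinish_spath [simp]: "pathfinish (spath u v g) = g v"
  by (simp add: spath_def pathfinish_def)

lemma reparam_ofI:
  assumes "continuous_on {0..1} \<sigma>" "mono_on {0..1} \<sigma>" "\<sigma> 0 = 0" "\<sigma> 1 = 1"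
    "\<And>t. t \<in> {0..1} \<Longrightarrow> p t = q (\<sigma> t)"
  shows "reparam_of p q"
proof -
  have "\<sigma> ` {0..1} = {0..1}"
  proof
    show "\<sigma> ` {0..1} \<subseteq> {0..1}"
    proof
      fix y assume "y \<in> \<sigma> ` {0..1}"
      then obtain t where t: "t \<in> {0..1}" "y = \<sigma> t" by auto
      have "\<sigma> 0 \<le> \<sigma> t" "\<sigma> t \<le> \<sigma> 1"
        using t assms(2) by (auto intro: mono_onD)
      then show "y \<in> {0..1}" using t assms by auto
    qed
    show "{0..1} \<subseteq> \<sigma> ` {0..1}"
    proof
      fix y :: real assume "y \<in> {0..1}"
      then obtain x where "0 \<le> x" "x \<le> 1" "\<sigma> x = y"
        using IVT'[of \<sigma> 0 y 1] assms by auto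
      then show "y \<in> \<sigma> ` {0..1}" by force
    qed
  qed
  then show ?thesis unfolding reparam_of_def using assms by blast
qed

lemma reparam_ends:
  assumes "reparam_of p q"
  shows "pathstart p = pathstart q \<and> pathfinish p = pathfinish q"
proof -
  obtain \<sigma> where s: "continuous_on {0..1} \<sigma>" "\<sigma> ` {0..1} = {0..1}" "mono_on {0..1} \<sigma>"
    "\<forall>t\<in>{0..1}. p t = q (\<sigma> t)" using assms unfolding reparam_of_def by blast
  obtain a where a: "a \<in> {0..1}" "\<sigma> a = 0" using s(2) by (metis atLeastAtMost_iff imageE order_refl zero_le_one)
  obtain b where b: "b \<in> {0..1}" "\<sigma> b = 1" using s(2) by (metis atLeastAtMost_iff imageE order_refl zero_le_one)
  have "\<sigma> 0 \<le> \<sigma> a" using a mono_onD[OF s(3), of 0 a] by auto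
  moreover have "\<sigma> 0 \<in> {0..1}" using s(2) by auto
  ultimately have "\<sigma> 0 = 0" using a by auto
  have "\<sigma> b \<le> \<sigma> 1" using b mono_onD[OF s(3), of b 1] by auto
  moreover have "\<sigma> 1 \<in> {0..1}" using s(2) by auto
  ultimately have "\<sigma> 1 = 1" using b by auto
  show ?thesis using s(4) \<open>\<sigma> 0 = 0\<close> \<open>\<sigma> 1 = 1\<close>
    by (auto simp: pathstart_def pathfinish_def)
qed

lemma reparam_sigma:
  assumes "reparam_of p q"
  obtains \<sigma> where "continuous_on {0..1} \<sigma>" "mono_on {0..1} \<sigma>" "\<sigma> 0 = 0" "\<sigma> 1 = 1"
    "\<And>t. t \<in> {0..1} \<Longrightarrow> p t = q (\<sigma> t)" "\<And>t. t \<in> {0..1} \<Longrightarrow> \<sigma> t \<in> {0..1}"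
proof -
  obtain \<sigma> where s: "continuous_on {0..1} \<sigma>" "\<sigma> ` {0..1} = {0..1}" "mono_on {0..1} \<sigma>"
    "\<forall>t\<in>{0..1}. p t = q (\<sigma> t)" using assms unfolding reparam_of_def by blast
  obtain a where a: "a \<in> {0..1}" "\<sigma> a = 0" using s(2) by (metis atLeastAtMost_iff imageE order_refl zero_le_one)
  obtain b where b: "b \<in> {0..1}" "\<sigma> b = 1" using s(2) by (metis atLeastAtMost_iff imageE order_refl zero_le_one)
  have "\<sigma> 0 \<le> \<sigma> a" using a mono_onD[OF s(3), of 0 a] by auto
  moreover have "\<sigma> 0 \<in> {0..1}" using s(2) by auto
  ultimately have "\<sigma> 0 = 0" using a by auto
  have "\<sigma> b \<le> \<sigma> 1" using b mono_onD[OF s(3), of b 1] by auto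
  moreover have "\<sigma> 1 \<in> {0..1}" using s(2) by auto
  ultimately have "\<sigma> 1 = 1" using b by auto
  show ?thesis using that s \<open>\<sigma> 0 = 0\<close> \<open>\<sigma> 1 = 1\<close> by blast
qed

lemma reparam_refl: "reparam_of p p"
  by (rule reparam_ofI[of id]) (auto simp: mono_on_def)

lemma reparam_assoc: "reparam_of ((p +++ q) +++ s) (p +++ (q +++ s))"
proof (rule reparam_ofI[of "\<lambda>t::real. if t \<le> 1/4 then 2*t else if t \<le> 1/2 then t + 1/4 else (t+1)/2"])
  show "continuous_on {0..1} (\<lambda>t::real. if t \<le> 1/4 then 2*t else if t \<le> 1/2 then t + 1/4 else (t+1)/2)"
    by (intro continuous_on_cases_le continuous_intros) auto
  show "mono_on {0..1} (\<lambda>t::real. if t \<le> 1/4 then 2*t else if t \<le> 1/2 then t + 1/4 else (t+1)/2)"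
    by (auto simp: mono_on_def)
  fix t :: real assume "t \<in> {0..1}"
  show "((p +++ q) +++ s) t = (p +++ (q +++ s)) (if t \<le> 1/4 then 2*t else if t \<le> 1/2 then t + 1/4 else (t+1)/2)"
  proof -
    consider "t \<le> 1/4" | "1/4 < t" "t \<le> 1/2" | "1/2 < t" by linarith
    then show ?thesis
    proof cases
      case 1 then show ?thesis by (simp add: joinpaths_def)
    next
      case 2
      have e: "2 * (2 * (t + 1 / 4) - 1) = 2 * (2 * t) - (1::real)" by (simp add: algebra_simps)
      from 2 show ?thesis by (simp add: joinpaths_def e)
    next
      case 3
      from 3 show ?thesis
        apply (simp add: joinpaths_def)
        apply (rule arg_cong[where f=s])
        apply (simp add: field_simps)
        done
    qed
  qed
qed auto

lemma reparam_join_left: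
  assumes "reparam_of p r"
  shows "reparam_of (p +++ q) (r +++ q)"
proof -
  obtain \<sigma> where s: "continuous_on {0..1} \<sigma>" "mono_on {0..1} \<sigma>" "\<sigma> 0 = 0" "\<sigma> 1 = 1"
    "\<And>t. t \<in> {0..1} \<Longrightarrow> p t = r (\<sigma> t)" "\<And>t. t \<in> {0..1} \<Longrightarrow> \<sigma> t \<in> {0..1}"
    using reparam_sigma[OF assms] by blast
  let ?s = "\<lambda>t::real. if t \<le> 1/2 then \<sigma> (2*t) / 2 else t"
  show ?thesis
  proof (rule reparam_ofI[of ?s])
    have "continuous_on {x \<in> {0..1}. x \<le> 1/2} (\<lambda>t. \<sigma> (2*t))"
      by (rule continuous_on_compose2[OF s(1)]) (auto intro!: continuous_intros)
    then have "continuous_on {x \<in> {0..1}. x \<le> 1/2} (\<lambda>t. \<sigma> (2*t) / 2)"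
      by (intro continuous_on_divide continuous_on_add continuous_on_const) auto
    moreover have "\<And>t. t*2 = 1 \<Longrightarrow> \<sigma> (2*t) = 1" by (simp add: mult.commute s(4))
    ultimately show "continuous_on {0..1} ?s"
      apply -
      apply (rule continuous_on_cases_le[where h="\<lambda>x. x" and a="1/2"])
      by (auto intro!: continuous_intros)
    show "mono_on {0..1} ?s"
    proof (rule mono_onI)
      fix x y :: real assume xy: "x \<in> {0..1}" "y \<in> {0..1}" "x \<le> y"
      show "?s x \<le> ?s y"
      proof (cases "y \<le> 1/2")
        case True then show ?thesis using xy s(2) by (auto intro: mono_onD)
      next
        case False
        then show ?thesis using xy s(6)[of "2*x"] by auto
      qed
    qed
    show "?s 0 = 0" "?s 1 = 1" using s by auto
    fix t :: real assume t: "t \<in> {0..1}"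
    show "(p +++ q) t = (r +++ q) (?s t)"
    proof (cases "t \<le> 1/2")
      case True
      then have "\<sigma> (2*t) \<le> 1" using s(6)[of "2*t"] t by auto
      then show ?thesis using True t s(5)[of "2*t"] by (auto simp: joinpaths_def)
    qed (auto simp: joinpaths_def)
  qed
qed

lemma reparam_join_right:
  assumes "reparam_of p r" "pathfinish q = pathstart r"
  shows "reparam_of (q +++ p) (q +++ r)"
proof -
  obtain \<sigma> where s: "continuous_on {0..1} \<sigma>" "mono_on {0..1} \<sigma>" "\<sigma> 0 = 0" "\<sigma> 1 = 1"
    "\<And>t. t \<in> {0..1} \<Longrightarrow> p t = r (\<sigma> t)" "\<And>t. t \<in> {0..1} \<Longrightarrow> \<sigma> t \<in> {0..1}"
    using reparam_sigma[OF assms(1)] by blast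
  let ?s = "\<lambda>t::real. if t \<le> 1/2 then t else (\<sigma> (2*t-1) + 1) / 2"
  show ?thesis
  proof (rule reparam_ofI[of ?s])
    have "continuous_on {x \<in> {0..1}. 1/2 \<le> x} (\<lambda>t. \<sigma> (2*t-1))"
      by (rule continuous_on_compose2[OF s(1)]) (auto intro!: continuous_intros)
    then have "continuous_on {x \<in> {0..1}. 1/2 \<le> x} (\<lambda>t. (\<sigma> (2*t-1) + 1) / 2)"
      by (intro continuous_on_divide continuous_on_add continuous_on_const) auto
    moreover have "\<And>t. t*2 = 1 \<Longrightarrow> \<sigma> (2*t-1) = 0" by (simp add: mult.commute s(3))
    ultimately show "continuous_on {0..1} ?s"
      apply -
      apply (rule continuous_on_cases_le[where h="\<lambda>x. x" and a="1/2"])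
      by (auto intro!: continuous_intros)
    show "mono_on {0..1} ?s"
    proof (rule mono_onI)
      fix x y :: real assume xy: "x \<in> {0..1}" "y \<in> {0..1}" "x \<le> y"
      show "?s x \<le> ?s y"
      proof (cases "x \<le> 1/2")
        case False then show ?thesis using xy s(2) by (auto intro: mono_onD)
      next
        case True
        then show ?thesis using xy s(6)[of "2*y-1"] by auto
      qed
    qed
    show "?s 0 = 0" "?s 1 = 1" using s by auto
    fix t :: real assume t: "t \<in> {0..1}"
    show "(q +++ p) t = (q +++ r) (?s t)"
    proof (cases "t \<le> 1/2")
      case False
      have A: "\<sigma> (2*t-1) \<in> {0..1}" using s(6)[of "2*t-1"] t False by auto
      show ?thesis
      proof (cases "\<sigma> (2*t-1) = 0")
        case True
        then show ?thesis using False t s(5)[of "2*t-1"] assms(2)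
          by (auto simp: joinpaths_def pathfinish_def pathstart_def)
      next
        case F2: False
        then show ?thesis using False t s(5)[of "2*t-1"] A
          by (auto simp: joinpaths_def) (simp add: field_simps)
      qed
    qed (auto simp: joinpaths_def)
  qed
qed

lemma reparam_const_left: "reparam_of ((\<lambda>_. g 0) +++ g) g"
  by (rule reparam_ofI[of "\<lambda>t::real. if t \<le> 1/2 then 0 else 2*t-1"])
     (auto intro!: continuous_on_cases_le continuous_intros simp: mono_on_def joinpaths_def)

lemma reparam_const_right: "reparam_of (g +++ (\<lambda>_. g 1)) g"
  by (rule reparam_ofI[of "\<lambda>t::real. if t \<le> 1/2 then 2*t else 1"])
     (auto intro!: continuous_on_cases_le continuous_intros simp: mono_on_def joinpaths_def)

lemma reparam_split:
  fixes u w v :: real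
  assumes "u < w" "w < v"
  shows "reparam_of (spath u v f) (spath u w f +++ spath w v f)"
proof -
  define l where "l = (w-u)/(v-u)"
  have l: "0 < l" "l < 1" using assms by (auto simp: l_def field_simps)
  let ?s = "\<lambda>t::real. if t \<le> l then t / (2*l) else 1/2 + (t-l)/(2*(1-l))"
  show ?thesis
  proof (rule reparam_ofI[of ?s])
    show "continuous_on {0..1} ?s"
      using l by (intro continuous_on_cases_le continuous_intros) auto
    show "mono_on {0..1} ?s"
    proof (rule mono_onI)
      fix x y :: real assume xy: "x \<in> {0..1}" "y \<in> {0..1}" "x \<le> y"
      consider "y \<le> l" | "x \<le> l" "l < y" | "l < x" using xy by linarith
      then show "?s x \<le> ?s y"
      proof cases
        case 1 then show ?thesis using xy l by (simp add: divide_right_mono)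
      next
        case 2
        have "x / (2*l) \<le> 1/2" using 2 l by (simp add: field_simps)
        moreover have "0 \<le> (y-l)/(2*(1-l))" using 2 l by simp
        ultimately show ?thesis using 2 by simp
      next
        case 3 then show ?thesis using xy l by (simp add: divide_right_mono)
      qed
    qed
    show "?s 0 = 0" using l by simp
    show "?s 1 = 1" using l by (simp add: field_simps)
    fix t :: real assume t: "t \<in> {0..1}"
    show "spath u v f t = (spath u w f +++ spath w v f) (?s t)"
    proof (cases "t \<le> l")
      case True
      have le: "t / (2*l) \<le> 1/2" using True l by (simp add: field_simps)
      show ?thesis using True le
        apply (simp add: joinpaths_def spath_def)
        apply (rule arg_cong[where f=f])
        using l assms by (simp add: l_def field_simps)
    next
      case False
      have gt: "\<not> 1/2 + (t-l)/(2*(1-l)) \<le> 1/2" using False l by (simp add: field_simps)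
      have e1: "2 * (1/2 + (t-l)/(2*(1-l))) - 1 = (t-l)/(1-l)" using l by (simp add: field_simps)
      have e2: "1 - l = (v-w)/(v-u)" using assms by (simp add: l_def field_simps)
      have e3: "(v-w) * ((t-l)/(1-l)) = (v-u)*(t-l)" using assms by (simp add: e2 field_simps)
      have e4: "(v-u)*l = w-u" using assms by (simp add: l_def field_simps)
      have e: "(v - w) * (2 * (1/2 + (t-l)/(2*(1-l))) - 1) + w = (v-u)*t + u"
        by (simp only: e1 e3) (simp add: right_diff_distrib e4)
      have "(spath u w f +++ spath w v f) (?s t) = f ((v - w) * (2 * (1/2 + (t-l)/(2*(1-l))) - 1) + w)"
        using gt False by (simp add: joinpaths_def spath_def)
      then show ?thesis by (simp only: e) (simp add: spath_def)
    qed
  qed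
qed


lemma path_equiv_refl: "path_equiv M p p"
  unfolding path_equiv_def by simp

lemma path_equiv_trans: "path_equiv M p q \<Longrightarrow> path_equiv M q r \<Longrightarrow> path_equiv M p r"
  unfolding path_equiv_def by (rule rtranclp_trans)

lemma path_equiv_sym: "path_equiv M p q \<Longrightarrow> path_equiv M q p"
  unfolding path_equiv_def
proof (induction rule: rtranclp_induct)
  case base then show ?case by simp
next
  case (step y z)
  have "(\<lambda>p q. path p \<and> path_image p \<subseteq> M \<and> path q \<and> path_image q \<subseteq> M \<and>
      (\<exists>r. path r \<and> path_image r \<subseteq> M \<and> reparam_of p r \<and> reparam_of q r)) z y"
    using step(2) by blast
  then show ?case using step(3) by (rule converse_rtranclp_into_rtranclp)
qed

lemma path_equiv_ends: "path_equiv M p q \<Longrightarrow> pathstart p = pathstart q \<and> pathfinish p = pathfinish q"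
  unfolding path_equiv_def
proof (induction rule: rtranclp_induct)
  case (step y z)
  then obtain r where "reparam_of y r" "reparam_of z r" by blast
  then show ?case using step(3) reparam_ends by metis
qed simp

lemma path_equiv_paths: "path_equiv M p q \<Longrightarrow> p = q \<or> (path p \<and> path_image p \<subseteq> M \<and> path q \<and> path_image q \<subseteq> M)"
  unfolding path_equiv_def
  by (induction rule: rtranclp_induct) auto

lemma path_equiv_base:
  assumes "path p" "path_image p \<subseteq> M" "path q" "path_image q \<subseteq> M" "path r" "path_image r \<subseteq> M"
    "reparam_of p r" "reparam_of q r"
  shows "path_equiv M p q"
  unfolding path_equiv_def using assms by (intro r_into_rtranclp) blast

lemma path_equiv_reparam:
  assumes "path p" "path_image p \<subseteq> M" "path r" "path_image r \<subseteq> M" "reparam_of p r"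
  shows "path_equiv M p r"
  using assms by (intro path_equiv_base[of p M r r]) (auto simp: reparam_refl)

lemma path_equiv_join_left:
  assumes "path_equiv M p p'" "path q" "path_image q \<subseteq> M" "pathfinish p = pathstart q"
  shows "path_equiv M (p +++ q) (p' +++ q)"
proof (induction rule: rtranclp_induct[OF assms(1)[unfolded path_equiv_def]])
  case 1 then show ?case by (simp add: path_equiv_refl)
next
  case (2 y z)
  have yp: "path_equiv M p y" using 2(1) unfolding path_equiv_def .
  obtain r where r: "path y" "path_image y \<subseteq> M" "path z" "path_image z \<subseteq> M" "path r" "path_image r \<subseteq> M"
    "reparam_of y r" "reparam_of z r" using 2(2) by blast
  have e: "pathfinish y = pathstart q" "pathfinish z = pathstart q" "pathfinish r = pathstart q"
    using path_equiv_ends[OF yp] reparam_ends[OF r(7)] reparam_ends[OF r(8)] assms(4) by auto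
  have "path_equiv M (y +++ q) (z +++ q)"
    apply (rule path_equiv_base[of _ _ _ "r +++ q"])
    using r e assms(2,3) by (auto simp: path_image_join intro: reparam_join_left)
  then show ?case using 2(3) path_equiv_trans by blast
qed

lemma path_equiv_join_right:
  assumes "path_equiv M p p'" "path q" "path_image q \<subseteq> M" "pathfinish q = pathstart p"
  shows "path_equiv M (q +++ p) (q +++ p')"
proof (induction rule: rtranclp_induct[OF assms(1)[unfolded path_equiv_def]])
  case 1 then show ?case by (simp add: path_equiv_refl)
next
  case (2 y z)
  have yp: "path_equiv M p y" using 2(1) unfolding path_equiv_def .
  obtain r where r: "path y" "path_image y \<subseteq> M" "path z" "path_image z \<subseteq> M" "path r" "path_image r \<subseteq> M"
    "reparam_of y r" "reparam_of z r" using 2(2) by blast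
  have e: "pathstart y = pathfinish q" "pathstart z = pathfinish q" "pathstart r = pathfinish q"
    using path_equiv_ends[OF yp] reparam_ends[OF r(7)] reparam_ends[OF r(8)] assms(4) by auto
  have "path_equiv M (q +++ y) (q +++ z)"
    apply (rule path_equiv_base[of _ _ _ "q +++ r"])
    using r e assms(2,3) by (auto simp: path_image_join intro: reparam_join_right)
  then show ?case using 2(3) path_equiv_trans by blast
qed

lemma path_equiv_assoc:
  assumes "path p" "path q" "path s" "path_image p \<subseteq> M" "path_image q \<subseteq> M" "path_image s \<subseteq> M"
    "pathfinish p = pathstart q" "pathfinish q = pathstart s"
  shows "path_equiv M (p +++ (q +++ s)) ((p +++ q) +++ s)"
  apply (rule path_equiv_sym, rule path_equiv_reparam)
  using assms by (auto simp: path_image_join reparam_assoc)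

lemma path_equiv_const_left:
  assumes "path g" "path_image g \<subseteq> M" "c = pathstart g"
  shows "path_equiv M ((\<lambda>_. c) +++ g) g"
proof -
  have pc: "path (\<lambda>_::real. c)" by (simp add: path_def continuous_on_const)
  have c: "c \<in> M" using assms pathstart_in_path_image by blast
  have ic: "path_image (\<lambda>_::real. c) = {c}" by (auto simp: path_image_def)
  show ?thesis
    apply (rule path_equiv_reparam)
    using assms reparam_const_left[of g] pc c ic
    by (auto simp: path_image_join pathstart_def pathfinish_def)
qed

lemma path_equiv_const_right:
  assumes "path g" "path_image g \<subseteq> M" "c = pathfinish g"
  shows "path_equiv M (g +++ (\<lambda>_. c)) g"
proof -
  have pc: "path (\<lambda>_::real. c)" by (simp add: path_def continuous_on_const)
  have c: "c \<in> M" using assms pathfinish_in_path_image by blast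
  have ic: "path_image (\<lambda>_::real. c) = {c}" by (auto simp: path_image_def)
  show ?thesis
    apply (rule path_equiv_reparam)
    using assms reparam_const_right[of g] pc c ic
    by (auto simp: path_image_join pathstart_def pathfinish_def)
qed

lemma path_spath_gen:
  assumes "u \<le> v" "continuous_on {u..v} g"
  shows "path (spath u v g)"
  unfolding path_def spath_def
proof (rule continuous_on_compose2[OF assms(2)])
  show "continuous_on {0..1} (\<lambda>x::real. (v - u) * x + u)" by (intro continuous_intros)
  show "(\<lambda>x. (v - u) * x + u) ` {0..1} \<subseteq> {u..v}"
  proof
    fix y assume "y \<in> (\<lambda>x. (v - u) * x + u) ` {0..1}"
    then obtain x where x: "x \<in> {0..1}" "y = (v - u) * x + u" by auto
    have "(v-u) * x \<le> (v - u) * 1" using x assms by (intro mult_left_mono) auto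
    moreover have "0 \<le> (v-u) * x" using x assms by auto
    ultimately show "y \<in> {u..v}" using x by auto
  qed
qed

lemma path_image_spath_le:
  assumes "u \<le> v"
  shows "path_image (spath u v g) = g ` {u..v}"
proof
  show "path_image (spath u v g) \<subseteq> g ` {u..v}"
  proof
    fix y assume "y \<in> path_image (spath u v g)"
    then obtain x where x: "x \<in> {0..1}" "y = g ((v - u) * x + u)" by (auto simp: path_image_def spath_def)
    have "(v-u) * x \<le> (v - u) * 1" using x assms by (intro mult_left_mono) auto
    moreover have "0 \<le> (v-u) * x" using x assms by auto
    ultimately show "y \<in> g ` {u..v}" using x by auto
  qed
  show "g ` {u..v} \<subseteq> path_image (spath u v g)"
  proof
    fix y assume "y \<in> g ` {u..v}"
    then obtain z where z: "z \<in> {u..v}" "y = g z" by auto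
    show "y \<in> path_image (spath u v g)"
    proof (cases "u = v")
      case True
      then show ?thesis using z by (auto simp: path_image_def spath_def)
    next
      case False
      then have "(z-u)/(v-u) \<in> {0..1}" using z assms by (auto simp: field_simps)
      moreover have "(v - u) * ((z-u)/(v-u)) + u = z" using False by (simp add: field_simps)
      ultimately show ?thesis using z unfolding path_image_def spath_def
        by (intro image_eqI[where x="(z-u)/(v-u)"]) auto
    qed
  qed
qed

lemma inj_spath:
  assumes "u < v" "inj_on g {u..v}"
  shows "inj_on (spath u v g) {0..1}"
proof (rule inj_onI)
  fix x y assume xy: "x \<in> {0..1}" "y \<in> {0..1}" "spath u v g x = spath u v g y"
  have m: "\<And>x. x \<in> {0..1} \<Longrightarrow> (v - u) * x + u \<in> {u..v}"
  proof -
    fix x :: real assume x: "x \<in> {0..1}"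
    have "(v-u) * x \<le> (v - u) * 1" using x assms by (intro mult_left_mono) auto
    moreover have "0 \<le> (v-u) * x" using x assms by auto
    ultimately show "(v - u) * x + u \<in> {u..v}" by auto
  qed
  have "(v - u) * x + u = (v - u) * y + u"
    using inj_onD[OF assms(2) _ m[OF xy(1)] m[OF xy(2)]] xy(3) by (auto simp: spath_def)
  then show "x = y" using assms by auto
qed

lemma arc_spath_gen:
  assumes "u < v" "continuous_on {u..v} g" "inj_on g {u..v}"
  shows "arc (spath u v g)"
  unfolding arc_def using assms path_spath_gen[of u v g] inj_spath[of u v g] by simp

lemma spath_const: "spath u u g = (\<lambda>_. g u)"
  by (simp add: spath_def)

lemma arcs_same_image_reparam:
  fixes p q :: "real \<Rightarrow> 'a::t2_space"
  assumes "arc p" "arc q" "path_image p = path_image q" "pathstart p = pathstart q"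
  shows "reparam_of p q"
proof -
  have cq: "continuous_on {0..1} q" "continuous_on {0..1} p" using assms arc_imp_path path_def by blast+
  obtain g where g: "homeomorphism {0..1} (path_image q) q g"
    using homeomorphism_compact[of "{0..1}" q "path_image q"] cq assms(2)
    by (auto simp: path_image_def arc_def)
  define \<sigma> where "\<sigma> = g \<circ> p"
  have gc: "continuous_on (path_image q) g" and gq: "\<And>x. x \<in> {0..1} \<Longrightarrow> g (q x) = x"
    and qg: "\<And>y. y \<in> path_image q \<Longrightarrow> q (g y) = y" and gim: "g ` path_image q = {0..1}"
    using g unfolding homeomorphism_def by auto
  have sc: "continuous_on {0..1} \<sigma>" unfolding \<sigma>_def
    by (rule continuous_on_compose[OF cq(2)]) (use gc assms(3) in \<open>simp add: path_image_def\<close>)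
  have pin: "\<And>t. t \<in> {0..1} \<Longrightarrow> p t \<in> path_image q" using assms(3) by (auto simp: path_image_def)
  have sinj: "inj_on \<sigma> {0..1}"
  proof (rule inj_onI)
    fix x y assume "x \<in> {0..1}" "y \<in> {0..1}" "\<sigma> x = \<sigma> y"
    then have "q (g (p x)) = q (g (p y))" by (simp add: \<sigma>_def)
    then have "p x = p y" using qg pin \<open>x \<in> {0..1}\<close> \<open>y \<in> {0..1}\<close> by simp
    then show "x = y" using assms(1) \<open>x \<in> {0..1}\<close> \<open>y \<in> {0..1}\<close> by (auto simp: arc_def inj_on_def)
  qed
  have s0: "\<sigma> 0 = 0" using assms(4) gq[of 0] by (simp add: \<sigma>_def pathstart_def)
  have sim: "\<sigma> ` {0..1} = {0..1}" unfolding \<sigma>_def image_comp[symmetric]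
    using gim assms(3) by (simp add: path_image_def)
  have srange: "\<And>t. t \<in> {0..1} \<Longrightarrow> \<sigma> t \<in> {0..1}" using sim by auto
  have smono: "mono_on {0..1} \<sigma>"
  proof (rule mono_onI)
    fix x y :: real assume xy: "x \<in> {0..1}" "y \<in> {0..1}" "x \<le> y"
    show "\<sigma> x \<le> \<sigma> y"
    proof (cases "x = 0 \<or> x = y")
      case True then show ?thesis using s0 srange[OF xy(2)] by auto
    next
      case False
      then have "0 < x" "x < y" using xy by auto
      moreover have "continuous_on {0..y} \<sigma>" by (rule continuous_on_subset[OF sc]) (use xy in auto)
      moreover have "inj_on \<sigma> {0..y}" by (rule inj_on_subset[OF sinj]) (use xy in auto)
      ultimately have "(\<sigma> 0 < \<sigma> x \<and> \<sigma> x < \<sigma> y) \<or> (\<sigma> y < \<sigma> x \<and> \<sigma> x < \<sigma> 0)"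
        by (intro continuous_inj_imp_mono) auto
      then show ?thesis using s0 srange[OF xy(1)] by auto
    qed
  qed
  have "\<forall>t\<in>{0..1}. p t = q (\<sigma> t)" using qg pin by (simp add: \<sigma>_def)
  then show ?thesis unfolding reparam_of_def using sc sim smono by blast
qed


lemma spath_facts:
  assumes "path g" "0 \<le> u" "u \<le> v" "v \<le> 1"
  shows "path (spath u v g)" "path_image (spath u v g) \<subseteq> path_image g"
proof -
  have "continuous_on {u..v} g"
    by (rule continuous_on_subset[OF assms(1)[unfolded path_def]]) (use assms in auto)
  then show "path (spath u v g)" using assms path_spath_gen by blast
  have "path_image (spath u v g) = g ` {u..v}" by (rule path_image_spath_le) (use assms in auto)
  then show "path_image (spath u v g) \<subseteq> path_image g"
    using assms by (auto simp: path_image_def)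
qed

lemma split_equiv:
  assumes "path g" "path_image g \<subseteq> T" "0 \<le> s" "s \<le> 1"
  shows "path_equiv T g (spath 0 s g +++ spath s 1 g)"
proof -
  consider "s = 0" | "s = 1" | "0 < s" "s < 1" using assms by linarith
  then show ?thesis
  proof cases
    case 1
    then show ?thesis using assms
      by (auto simp: spath_const pathstart_def intro!: path_equiv_sym[OF path_equiv_const_left])
  next
    case 2
    then show ?thesis using assms
      by (auto simp: spath_const pathfinish_def intro!: path_equiv_sym[OF path_equiv_const_right])
  next
    case 3
    have f: "path (spath 0 s g)" "path_image (spath 0 s g) \<subseteq> path_image g"
            "path (spath s 1 g)" "path_image (spath s 1 g) \<subseteq> path_image g"
      using spath_facts[OF assms(1)] 3 by auto
    have "reparam_of (spath 0 1 g) (spath 0 s g +++ spath s 1 g)"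
      using 3 by (intro reparam_split) auto
    then show ?thesis
      using f assms by (intro path_equiv_reparam) (auto simp: path_image_join)
  qed
qed

definition uarc :: "'a::topological_space set \<Rightarrow> bool" where
  "uarc T \<longleftrightarrow> (\<forall>g h. arc g \<and> arc h \<and> path_image g \<subseteq> T \<and> path_image h \<subseteq> T \<and>
        pathstart g = pathstart h \<and> pathfinish g = pathfinish h \<longrightarrow>
        path_image g = path_image h)"

inductive chain :: "'a::topological_space set \<Rightarrow> nat \<Rightarrow> (real \<Rightarrow> 'a) \<Rightarrow> bool" for T where
  chain0: "x \<in> T \<Longrightarrow> chain T 0 (\<lambda>_. x)"
| chainS: "arc g \<Longrightarrow> path_image g \<subseteq> T \<Longrightarrow> chain T n q \<Longrightarrow> pathfinish g = pathstart q \<Longrightarrow>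
     chain T (Suc n) (g +++ q)"

lemma chain_path: "chain T n q \<Longrightarrow> path q \<and> path_image q \<subseteq> T"
proof (induction rule: chain.induct)
  case (chain0 x)
  then show ?case by (auto simp: path_def path_image_def continuous_on_const)
next
  case (chainS g q n)
  then show ?case by (auto simp: arc_imp_path path_image_join)
qed

lemma retrace_of_path_equiv: "path_equiv M p q \<Longrightarrow> retrace_equiv M p q"
  unfolding retrace_equiv_def by (intro r_into_rtranclp) simp

lemma retrace_of_step: "retrace_step M p q \<Longrightarrow> retrace_equiv M p q"
  unfolding retrace_equiv_def by (intro r_into_rtranclp) simp

lemma retrace_trans: "retrace_equiv M p q \<Longrightarrow> retrace_equiv M q r \<Longrightarrow> retrace_equiv M p r"
  unfolding retrace_equiv_def by (rule rtranclp_trans)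

lemma retrace_step_ends:
  assumes "retrace_step M p q"
  shows "pathstart p = pathstart q \<and> pathfinish p = pathfinish q"
proof -
  obtain \<alpha> c \<beta> where r: "pathfinish \<alpha> = pathstart c" "pathstart \<beta> = pathstart c"
    "path_equiv M p (\<alpha> +++ (c +++ (reversepath c +++ \<beta>)))" "path_equiv M q (\<alpha> +++ \<beta>)"
    using assms unfolding retrace_step_def by blast
  show ?thesis using path_equiv_ends[OF r(3)] path_equiv_ends[OF r(4)] by simp
qed

lemma retrace_ends: "retrace_equiv M p q \<Longrightarrow> pathstart p = pathstart q \<and> pathfinish p = pathfinish q"
  unfolding retrace_equiv_def
proof (induction rule: rtranclp_induct)
  case (step y z)
  then show ?case using path_equiv_ends retrace_step_ends by metis
qed simp

lemma cancel_step:
  fixes T :: "'a::t2_space set"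
  assumes U: "uarc T" and g: "arc g" "path_image g \<subseteq> T" and h: "arc h" "path_image h \<subseteq> T"
    and q: "chain T n q"
    and e1: "pathfinish g = pathstart h" and e2: "pathfinish h = pathstart q"
  shows "\<exists>m p'. m < Suc (Suc n) \<and> chain T m p' \<and> retrace_equiv T (g +++ (h +++ q)) p'"
proof -
  have pg: "path g" and ph: "path h" using g h arc_imp_path by auto
  have pq: "path q" "path_image q \<subseteq> T" using chain_path[OF q] by auto
  define S where "S = {0..1} \<inter> g -` path_image h"
  have Sc: "closed S" unfolding S_def
    using pg ph compact_imp_closed[OF compact_path_image[OF ph]]
    by (intro continuous_closed_preimage) (auto simp: path_def)
  have S1: "1 \<in> S" using e1 unfolding S_def by (auto simp: pathfinish_def pathstart_in_path_image)
  have Sb: "bdd_below S" unfolding S_def by (auto intro: bdd_belowI[where m=0])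
  define s0 where "s0 = Inf S"
  have s0S: "s0 \<in> S" unfolding s0_def using Sc S1 Sb closed_contains_Inf by blast
  have s0le: "\<And>s. s \<in> S \<Longrightarrow> s0 \<le> s" unfolding s0_def using Sb by (simp add: cInf_lower)
  have s01: "0 \<le> s0" "s0 \<le> 1" using s0S unfolding S_def by auto
  have ginj: "inj_on g {0..1}" and hinj: "inj_on h {0..1}" using g h arc_def by auto
  show ?thesis
  proof (cases "s0 = 1")
    case True
    have "path_image g \<inter> path_image h \<subseteq> {pathstart h}"
    proof
      fix x assume x: "x \<in> path_image g \<inter> path_image h"
      then obtain s where s: "s \<in> {0..1}" "x = g s" by (auto simp: path_image_def)
      then have "s \<in> S" using x unfolding S_def by auto
      then have "s = 1" using s0le True s by fastforce
      then show "x \<in> {pathstart h}" using s e1 by (simp add: pathfinish_def)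
    qed
    then have a: "arc (g +++ h)" using g h e1 by (intro arc_join) auto
    have "chain T (Suc n) ((g +++ h) +++ q)"
      using a g h e1 e2 q by (intro chainS) (auto simp: path_image_join)
    moreover have "path_equiv T (g +++ (h +++ q)) ((g +++ h) +++ q)"
      using pg ph pq g h e1 e2 by (intro path_equiv_assoc) auto
    ultimately show ?thesis using retrace_of_path_equiv by blast
  next
    case False
    then have s0l: "s0 < 1" using s01 by auto
    define m where "m = g s0"
    obtain u0 where u0: "u0 \<in> {0..1}" "h u0 = m" using s0S unfolding S_def m_def path_image_def by auto
    have mw: "m \<noteq> pathfinish g" using inj_onD[OF ginj, of s0 1] s01 s0l by (auto simp: m_def pathfinish_def)
    then have u0p: "0 < u0" using u0 e1 by (cases "u0 = 0") (auto simp: pathstart_def)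
    define \<alpha> where "\<alpha> = spath 0 s0 g"
    define c where "c = spath s0 1 g"
    define c2 where "c2 = spath 0 u0 h"
    define h2 where "h2 = spath u0 1 h"
    have fa: "path \<alpha>" "path_image \<alpha> \<subseteq> T" using spath_facts[OF pg, of 0 s0] s01 g unfolding \<alpha>_def by auto
    have fc: "path c" "path_image c \<subseteq> T" using spath_facts[OF pg, of s0 1] s01 g unfolding c_def by auto
    have fc2: "path c2" "path_image c2 \<subseteq> T" using spath_facts[OF ph, of 0 u0] u0 h unfolding c2_def by auto
    have fh2: "path h2" "path_image h2 \<subseteq> T" using spath_facts[OF ph, of u0 1] u0 h unfolding h2_def by auto
    have frc: "path (reversepath c)" "path_image (reversepath c) \<subseteq> T" using fc by auto
    have ends: "pathstart \<alpha> = g 0" "pathfinish \<alpha> = m" "pathstart c = m" "pathfinish c = pathfinish g"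
      "pathstart c2 = pathfinish g" "pathfinish c2 = m" "pathstart h2 = m" "pathfinish h2 = pathstart q"
      using e1 e2 u0 unfolding \<alpha>_def c_def c2_def h2_def m_def
      by (auto simp: pathstart_def pathfinish_def spath_def)
    have gcont: "continuous_on {0..1} g" "continuous_on {0..1} h" using pg ph path_def by auto
    have ac: "arc c" unfolding c_def using s0l s01
      by (intro arc_spath_gen) (auto intro: continuous_on_subset[OF gcont(1)] inj_on_subset[OF ginj])
    have ac2: "arc c2" unfolding c2_def using u0p u0
      by (intro arc_spath_gen) (auto intro: continuous_on_subset[OF gcont(2)] inj_on_subset[OF hinj])
    have "arc c \<and> arc (reversepath c2) \<and> path_image c \<subseteq> T \<and> path_image (reversepath c2) \<subseteq> T \<and>
        pathstart c = pathstart (reversepath c2) \<and> pathfinish c = pathfinish (reversepath c2)"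
      using ac ac2 fc fc2 ends by (simp add: arc_reversepath)
    then have "path_image c = path_image (reversepath c2)"
      using U unfolding uarc_def by blast
    then have "reparam_of c2 (reversepath c)"
      using ac ac2 ends by (intro arcs_same_image_reparam) (auto simp: arc_reversepath)
    then have c2rc: "path_equiv T c2 (reversepath c)"
      using fc2 frc by (intro path_equiv_reparam) auto
    have gs: "path_equiv T g (\<alpha> +++ c)" unfolding \<alpha>_def c_def
      using split_equiv[OF pg g(2)] s01 by auto
    have hs: "path_equiv T h (c2 +++ h2)" unfolding c2_def h2_def
      using split_equiv[OF ph h(2)] u0 by auto
    define \<beta> where "\<beta> = h2 +++ q"
    have fb: "path \<beta>" "path_image \<beta> \<subseteq> T" "pathstart \<beta> = m"
      using fh2 pq ends unfolding \<beta>_def by (auto simp: path_image_join)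
    have fhq: "path (h +++ q)" "path_image (h +++ q) \<subseteq> T" using ph h pq e2 by (auto simp: path_image_join)
    have st1: "path_equiv T (g +++ (h +++ q)) ((\<alpha> +++ c) +++ (h +++ q))"
      using gs fhq e1 by (intro path_equiv_join_left) auto
    have st2: "path_equiv T ((\<alpha> +++ c) +++ (h +++ q)) ((\<alpha> +++ c) +++ ((c2 +++ h2) +++ q))"
      using fa fc ends hs pq e1 e2
      by (intro path_equiv_join_right path_equiv_join_left) (auto simp: path_image_join)
    have st3: "path_equiv T ((\<alpha> +++ c) +++ ((c2 +++ h2) +++ q)) ((\<alpha> +++ c) +++ ((reversepath c +++ h2) +++ q))"
      using fa fc fh2 ends c2rc pq
      by (intro path_equiv_join_right path_equiv_join_left) (auto simp: path_image_join)
    have st4: "path_equiv T ((\<alpha> +++ c) +++ ((reversepath c +++ h2) +++ q)) ((\<alpha> +++ c) +++ (reversepath c +++ \<beta>))"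
      unfolding \<beta>_def using fa fc fh2 frc ends pq
      by (intro path_equiv_join_right path_equiv_sym[OF path_equiv_assoc]) (auto simp: path_image_join)
    have st5: "path_equiv T ((\<alpha> +++ c) +++ (reversepath c +++ \<beta>)) (\<alpha> +++ (c +++ (reversepath c +++ \<beta>)))"
      using fa fc frc fb ends
      by (intro path_equiv_sym[OF path_equiv_assoc]) (auto simp: path_image_join)
    have P: "path_equiv T (g +++ (h +++ q)) (\<alpha> +++ (c +++ (reversepath c +++ \<beta>)))"
      using path_equiv_trans[OF st1 path_equiv_trans[OF st2 path_equiv_trans[OF st3 path_equiv_trans[OF st4 st5]]]] .
    have "retrace_step T (g +++ (h +++ q)) (\<alpha> +++ \<beta>)"
      unfolding retrace_step_def
      apply (rule exI[of _ \<alpha>], rule exI[of _ c], rule exI[of _ \<beta>])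
      using fa fc fb ends P by (simp add: path_equiv_refl)
    then have R1: "retrace_equiv T (g +++ (h +++ q)) (\<alpha> +++ \<beta>)" by (rule retrace_of_step)
    have "\<exists>m p'. m < Suc (Suc n) \<and> chain T m p' \<and> path_equiv T (\<alpha> +++ \<beta>) p'"
    proof (cases "s0 = 0")
      case s0z: True
      have ac0: "\<alpha> = (\<lambda>_. m)" unfolding \<alpha>_def m_def using s0z by (simp add: spath_const)
      have A: "path_equiv T (\<alpha> +++ \<beta>) \<beta>" unfolding ac0 using fb by (intro path_equiv_const_left) auto
      show ?thesis
      proof (cases "u0 = 1")
        case True
        have hc: "h2 = (\<lambda>_. pathstart q)" unfolding h2_def using True e2 by (simp add: spath_const pathfinish_def)
        have "path_equiv T \<beta> q" unfolding \<beta>_def hc using pq by (intro path_equiv_const_left) auto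
        then have "path_equiv T (\<alpha> +++ \<beta>) q" using A path_equiv_trans by blast
        moreover have "n < Suc (Suc n)" by simp
        ultimately show ?thesis using q by blast
      next
        case False
        have ah2: "arc h2" unfolding h2_def using False u0
          by (intro arc_spath_gen) (auto intro: continuous_on_subset[OF gcont(2)] inj_on_subset[OF hinj])
        have "chain T (Suc n) \<beta>" unfolding \<beta>_def using ah2 fh2 q ends by (intro chainS) auto
        then show ?thesis using A by blast
      qed
    next
      case s0nz: False
      have aa: "arc \<alpha>" unfolding \<alpha>_def using s0nz s01
        by (intro arc_spath_gen) (auto intro: continuous_on_subset[OF gcont(1)] inj_on_subset[OF ginj])
      show ?thesis
      proof (cases "u0 = 1")
        case True
        have hc: "h2 = (\<lambda>_. pathstart q)" unfolding h2_def using True e2 by (simp add: spath_const pathfinish_def)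
        have "path_equiv T \<beta> q" unfolding \<beta>_def hc using pq by (intro path_equiv_const_left) auto
        then have "path_equiv T (\<alpha> +++ \<beta>) (\<alpha> +++ q)" using fa fb ends
          by (intro path_equiv_join_right) auto
        moreover have "chain T (Suc n) (\<alpha> +++ q)" using aa fa q ends True u0 e2
          by (intro chainS) (auto simp: pathfinish_def)
        ultimately show ?thesis by blast
      next
        case False
        have ah2: "arc h2" unfolding h2_def using False u0
          by (intro arc_spath_gen) (auto intro: continuous_on_subset[OF gcont(2)] inj_on_subset[OF hinj])
        have disj: "path_image \<alpha> \<inter> path_image h2 \<subseteq> {pathstart h2}"
        proof
          fix x assume x: "x \<in> path_image \<alpha> \<inter> path_image h2"
          then obtain s where s: "s \<in> {0..s0}" "x = g s"
            unfolding \<alpha>_def using s01 by (auto simp: path_image_spath_le)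
          obtain u where u: "u \<in> {u0..1}" "x = h u"
            using x unfolding h2_def using u0 by (auto simp: path_image_spath_le)
          have "g s \<in> path_image h" unfolding path_image_def using s u s01 u0
            by (intro image_eqI[where x=u]) auto
          then have "s \<in> S" unfolding S_def using s s01 by auto
          then have "s = s0" using s0le s by fastforce
          then have "h u = h u0" using s u u0 by (simp add: m_def)
          then have "u = u0" using inj_onD[OF hinj] u u0 by auto
          then show "x \<in> {pathstart h2}" using u ends u0 by (auto simp: h2_def)
        qed
        have aah: "arc (\<alpha> +++ h2)" using aa ah2 ends disj by (intro arc_join) auto
        have "path_equiv T (\<alpha> +++ \<beta>) ((\<alpha> +++ h2) +++ q)" unfolding \<beta>_def
          using fa fh2 pq ends by (intro path_equiv_assoc) auto
        moreover have "chain T (Suc n) ((\<alpha> +++ h2) +++ q)"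
          using aah fa fh2 q ends by (intro chainS) (auto simp: path_image_join)
        ultimately show ?thesis by blast
      qed
    qed
    then obtain m' p' where "m' < Suc (Suc n)" "chain T m' p'" "path_equiv T (\<alpha> +++ \<beta>) p'" by blast
    then show ?thesis using retrace_trans[OF R1 retrace_of_path_equiv] by blast
  qed
qed

lemma chain_loop:
  fixes T :: "'a::t2_space set"
  assumes U: "uarc T"
  shows "chain T n p \<Longrightarrow> pathstart p = pathfinish p \<Longrightarrow> retrace_equiv T p (\<lambda>_. pathstart p)"
proof (induction n arbitrary: p rule: less_induct)
  case (less n)
  show ?case
  proof (cases n)
    case 0
    then obtain x where "p = (\<lambda>_. x)" using less.prems(1) by (auto elim: chain.cases)
    then show ?thesis unfolding retrace_equiv_def by (simp add: pathstart_def)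
  next
    case (Suc n1)
    then obtain g q where gq: "p = g +++ q" "arc g" "path_image g \<subseteq> T" "chain T n1 q" "pathfinish g = pathstart q"
      using less.prems(1) by (auto elim: chain.cases)
    show ?thesis
    proof (cases n1)
      case 0
      then obtain x where "q = (\<lambda>_. x)" using gq(4) by (auto elim: chain.cases)
      then have "pathfinish g = pathstart g" using gq less.prems(2) by (auto simp: pathstart_def pathfinish_def joinpaths_def)
      then show ?thesis using arc_distinct_ends gq(2) by metis
    next
      case (Suc n2)
      then obtain h q' where hq: "q = h +++ q'" "arc h" "path_image h \<subseteq> T" "chain T n2 q'" "pathfinish h = pathstart q'"
        using gq(4) by (auto elim: chain.cases)
      obtain m p' where mp: "m < Suc (Suc n2)" "chain T m p'" "retrace_equiv T (g +++ (h +++ q')) p'"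
        using cancel_step[OF U gq(2,3) hq(2,3) hq(4) _ hq(5)] gq(5) hq(1) by auto
      have pe: "pathstart p' = pathstart p \<and> pathfinish p' = pathfinish p"
        using retrace_ends[OF mp(3)] gq(1) hq(1) by simp
      have "retrace_equiv T p' (\<lambda>_. pathstart p')"
        using less.IH[of m p'] mp pe less.prems(2) Suc \<open>n = Suc n1\<close> by auto
      then show ?thesis using retrace_trans[OF mp(3)] gq(1) hq(1) pe by simp
    qed
  qed
qed


lemma vd_inner:
  fixes f :: "real \<Rightarrow> 'e::euclidean_space"
  assumes "(f has_vector_derivative V) (at t)"
  shows "((\<lambda>\<tau>. f \<tau> \<bullet> v) has_real_derivative (V \<bullet> v)) (at t)"
proof -
  have "(f has_derivative (\<lambda>h. h *\<^sub>R V)) (at t)" using assms by (simp add: has_vector_derivative_def)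
  then have "((\<lambda>\<tau>. f \<tau> \<bullet> v) has_derivative (\<lambda>h. (h *\<^sub>R V) \<bullet> v)) (at t)"
    by (intro derivative_eq_intros) auto
  moreover have "(\<lambda>h. (h *\<^sub>R V) \<bullet> v) = (*) (V \<bullet> v)" by (auto simp: fun_eq_iff)
  ultimately show ?thesis by (simp add: has_field_derivative_def)
qed

lemma immersion_locally_inj:
  fixes M :: "'m::topological_space set" and A :: "(('m \<Rightarrow> 'e::euclidean_space) \<times> 'm set) set"
  assumes man: "smooth_manifold M A" and imm: "smooth_immersion_on M A s t c" and x: "x \<in> {s..t}"
  shows "\<exists>\<delta>>0. inj_on c (ball x \<delta> \<inter> {s..t})"
proof -
  obtain \<epsilon> c' where e: "\<epsilon> > 0" "continuous_on {s-\<epsilon><..<t+\<epsilon>} c'" "c' ` {s-\<epsilon><..<t+\<epsilon>} \<subseteq> M"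
    "\<forall>x\<in>{s..t}. c' x = c x"
    "\<forall>(\<phi>, U)\<in>A. let S = {x\<in>{s-\<epsilon><..<t+\<epsilon>}. c' x \<in> U} in
           smooth_on S (\<phi> \<circ> c') \<and> (\<forall>x\<in>S. vector_derivative (\<phi> \<circ> c') (at x) \<noteq> 0)"
    apply (insert imm[unfolded smooth_immersion_on_def, THEN conjunct2])
    apply (elim exE conjE)
    apply (rule that)
        apply assumption+
    done
  define I where "I = {s-\<epsilon><..<t+\<epsilon>}"
  have xI: "x \<in> I" using x e(1) by (auto simp: I_def)
  have "c' x \<in> M" using e(3) xI I_def by auto
  have cov: "M \<subseteq> (\<Union>(\<phi>, U)\<in>A. U)"
    using man[unfolded smooth_manifold_def] by (elim conjE)
  have ch: "\<forall>(\<phi>, U)\<in>A. openin (top_of_set M) U \<and> open (\<phi> ` U) \<and>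
                  homeomorphic_map (top_of_set U) (top_of_set (\<phi> ` U)) \<phi>"
    using man[unfolded smooth_manifold_def] by (elim conjE)
  obtain pu where "pu \<in> A" "c' x \<in> snd pu" using cov \<open>c' x \<in> M\<close> by force
  then obtain \<phi> U where pU: "(\<phi>, U) \<in> A" "c' x \<in> U" by (cases pu) auto
  have "openin (top_of_set M) U" using bspec[OF ch pU(1)] by simp
  then obtain Op where O: "open Op" "U = M \<inter> Op" by (auto simp: openin_open)
  define S where "S = {x\<in>I. c' x \<in> U}"
  have SO: "S = I \<inter> c' -` Op" using e(3) O(2) by (auto simp: S_def I_def)
  have So: "open S" unfolding SO using e(2) O(1) by (intro continuous_open_preimage) (auto simp: I_def)
  have xS: "x \<in> S" using xI pU by (auto simp: S_def)
  define f where "f = \<phi> \<circ> c'"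
  have "smooth_on S f \<and> (\<forall>y\<in>S. vector_derivative f (at y) \<noteq> 0)"
    using bspec[OF e(5) pU(1)] unfolding S_def I_def f_def Let_def by simp
  then have sm: "smooth_on S f" and nz: "\<forall>y\<in>S. vector_derivative f (at y) \<noteq> 0" by auto
  have "f differentiable_on S \<and> (\<forall>v\<in>Basis. smooth_on S (\<lambda>x. frechet_derivative f (at x) v))"
    using sm by (rule smooth_on.cases) simp
  then have fd: "f differentiable_on S" and sm1: "smooth_on S (\<lambda>y. frechet_derivative f (at y) 1)"
    by auto
  have "(\<lambda>y. frechet_derivative f (at y) 1) differentiable_on S"
    using sm1 by (rule smooth_on.cases) simp
  then have Fc: "continuous_on S (\<lambda>y. frechet_derivative f (at y) 1)"
    by (rule differentiable_imp_continuous_on)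
  define V where "V y = vector_derivative f (at y)" for y
  have hv: "\<And>y. y \<in> S \<Longrightarrow> (f has_vector_derivative V y) (at y)"
    using fd So by (auto simp: V_def differentiable_on_eq_differentiable_at vector_derivative_works[symmetric])
  have VF: "\<And>y. y \<in> S \<Longrightarrow> V y = frechet_derivative f (at y) 1"
  proof -
    fix y assume y: "y \<in> S"
    have d1: "(f has_derivative (\<lambda>h. h *\<^sub>R V y)) (at y)" using hv[OF y] by (simp add: has_vector_derivative_def)
    have "f differentiable (at y)" using fd So y by (auto simp: differentiable_on_eq_differentiable_at)
    then have d2: "(f has_derivative frechet_derivative f (at y)) (at y)" by (simp add: frechet_derivative_works[symmetric])
    have "(\<lambda>h. h *\<^sub>R V y) = frechet_derivative f (at y)" using has_derivative_unique[OF d1 d2] .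
    from fun_cong[OF this, of 1] show "V y = frechet_derivative f (at y) 1" by simp
  qed
  have Vc: "continuous_on S V" by (rule continuous_on_eq[OF Fc]) (simp add: VF)
  have V0: "V x \<noteq> 0" using nz xS by (simp add: V_def)
  then have nV: "norm (V x) > 0" by simp
  obtain d1 where d1: "d1 > 0" "\<forall>y\<in>S. dist y x < d1 \<longrightarrow> dist (V y) (V x) < norm (V x)"
    using Vc xS nV unfolding continuous_on_iff by blast
  obtain d2 where d2: "d2 > 0" "ball x d2 \<subseteq> S" using So xS open_contains_ball by blast
  define \<delta> where "\<delta> = min d1 d2"
  have pos: "\<And>y. y \<in> ball x \<delta> \<Longrightarrow> V y \<bullet> V x > 0"
  proof -
    fix y assume y: "y \<in> ball x \<delta>"
    then have yS: "y \<in> S" using d2 by (auto simp: \<delta>_def)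
    have "dist (V y) (V x) < norm (V x)" using d1 yS y by (auto simp: \<delta>_def dist_commute)
    then have lt: "norm (V x - V y) * norm (V x) < norm (V x) * norm (V x)"
      using nV by (simp add: dist_norm norm_minus_commute)
    have "(V x - V y) \<bullet> V x \<le> norm (V x - V y) * norm (V x)" by (rule norm_cauchy_schwarz)
    moreover have "V x \<bullet> V x = norm (V x) * norm (V x)" by (simp add: power2_eq_square[symmetric] power2_norm_eq_inner)
    moreover have "V y \<bullet> V x = V x \<bullet> V x - (V x - V y) \<bullet> V x" by (simp add: inner_diff_left)
    ultimately show "V y \<bullet> V x > 0" using lt by linarith
  qed
  have inj: "inj_on f (ball x \<delta>)"
  proof (rule inj_onI)
    fix y z assume yz: "y \<in> ball x \<delta>" "z \<in> ball x \<delta>" "f y = f z"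
    show "y = z"
    proof (rule ccontr)
      assume "y \<noteq> z"
      then consider "y < z" | "z < y" by linarith
      then show False
      proof cases
        case 1
        have "(\<lambda>\<tau>. f \<tau> \<bullet> V x) y < (\<lambda>\<tau>. f \<tau> \<bullet> V x) z"
        proof (rule DERIV_pos_imp_increasing[OF 1])
          fix w assume w: "y \<le> w" "w \<le> z"
          then have "w \<in> ball x \<delta>" using yz(1,2) by (auto simp: dist_real_def)
          then have wb: "w \<in> ball x \<delta>" .
          then have wS: "w \<in> S" using d2 by (auto simp: \<delta>_def)
          show "\<exists>D. ((\<lambda>\<tau>. f \<tau> \<bullet> V x) has_real_derivative D) (at w) \<and> 0 < D"
            using vd_inner[OF hv[OF wS], of "V x"] pos[OF wb] by blast
        qed
        then show False using yz(3) by simp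
      next
        case 2
        have "(\<lambda>\<tau>. f \<tau> \<bullet> V x) z < (\<lambda>\<tau>. f \<tau> \<bullet> V x) y"
        proof (rule DERIV_pos_imp_increasing[OF 2])
          fix w assume w: "z \<le> w" "w \<le> y"
          then have "w \<in> ball x \<delta>" using yz(1,2) by (auto simp: dist_real_def)
          then have wb: "w \<in> ball x \<delta>" .
          then have wS: "w \<in> S" using d2 by (auto simp: \<delta>_def)
          show "\<exists>D. ((\<lambda>\<tau>. f \<tau> \<bullet> V x) has_real_derivative D) (at w) \<and> 0 < D"
            using vd_inner[OF hv[OF wS], of "V x"] pos[OF wb] by blast
        qed
        then show False using yz(3) by simp
      qed
    qed
  qed
  have "inj_on c (ball x \<delta> \<inter> {s..t})"
  proof (rule inj_onI)
    fix y z assume yz: "y \<in> ball x \<delta> \<inter> {s..t}" "z \<in> ball x \<delta> \<inter> {s..t}" "c y = c z"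
    then have "f y = f z" using e(4) by (simp add: f_def)
    then show "y = z" using inj_onD[OF inj] yz by auto
  qed
  moreover have "\<delta> > 0" using d1 d2 by (simp add: \<delta>_def)
  ultimately show ?thesis by blast
qed


section \<open>Pushing forward along psi\<close>

lemma push_path:
  assumes "continuous_on T \<psi>" "\<psi> ` T \<subseteq> M" "path p" "path_image p \<subseteq> T"
  shows "path (\<psi> \<circ> p) \<and> path_image (\<psi> \<circ> p) \<subseteq> M"
proof
  show "path (\<psi> \<circ> p)" unfolding path_def
    using assms by (intro continuous_on_compose) (auto simp: path_def path_image_def intro: continuous_on_subset)
  show "path_image (\<psi> \<circ> p) \<subseteq> M" using assms by (auto simp: path_image_def)
qed

lemma push_reparam: "reparam_of p r \<Longrightarrow> reparam_of (\<psi> \<circ> p) (\<psi> \<circ> r)"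
  unfolding reparam_of_def by auto

lemma push_path_equiv:
  assumes "continuous_on T \<psi>" "\<psi> ` T \<subseteq> M" "path_equiv T p q"
  shows "path_equiv M (\<psi> \<circ> p) (\<psi> \<circ> q)"
  using assms(3) unfolding path_equiv_def
proof (induction rule: rtranclp_induct)
  case base then show ?case by simp
next
  case (step y z)
  obtain r where r: "path y" "path_image y \<subseteq> T" "path z" "path_image z \<subseteq> T" "path r" "path_image r \<subseteq> T"
    "reparam_of y r" "reparam_of z r" using step(2) by blast
  have "path_equiv M (\<psi> \<circ> y) (\<psi> \<circ> z)"
    using push_path[OF assms(1,2)] r
    by (intro path_equiv_base[of _ _ _ "\<psi> \<circ> r"] push_reparam) auto
  then show ?case using step(3) path_equiv_trans unfolding path_equiv_def by blast
qed

lemma comp_join: "\<psi> \<circ> (p +++ q) = (\<psi> \<circ> p) +++ (\<psi> \<circ> q)"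
  by (auto simp: joinpaths_def fun_eq_iff)

lemma comp_rev: "\<psi> \<circ> reversepath c = reversepath (\<psi> \<circ> c)"
  by (auto simp: reversepath_def fun_eq_iff)

lemma push_step:
  assumes "continuous_on T \<psi>" "\<psi> ` T \<subseteq> M" "retrace_step T p q"
  shows "retrace_step M (\<psi> \<circ> p) (\<psi> \<circ> q)"
proof -
  obtain \<alpha> c \<beta> where r: "path \<alpha>" "path c" "path \<beta>"
        "path_image \<alpha> \<subseteq> T" "path_image c \<subseteq> T" "path_image \<beta> \<subseteq> T"
        "pathfinish \<alpha> = pathstart c" "pathstart \<beta> = pathstart c"
        "path_equiv T p (\<alpha> +++ (c +++ (reversepath c +++ \<beta>)))"
        "path_equiv T q (\<alpha> +++ \<beta>)"
    using assms(3) unfolding retrace_step_def by blast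
  have P: "path (\<psi> \<circ> \<alpha>) \<and> path_image (\<psi> \<circ> \<alpha>) \<subseteq> M" "path (\<psi> \<circ> c) \<and> path_image (\<psi> \<circ> c) \<subseteq> M"
    "path (\<psi> \<circ> \<beta>) \<and> path_image (\<psi> \<circ> \<beta>) \<subseteq> M"
    using push_path[OF assms(1,2)] r by auto
  have E: "pathfinish (\<psi> \<circ> \<alpha>) = pathstart (\<psi> \<circ> c)" "pathstart (\<psi> \<circ> \<beta>) = pathstart (\<psi> \<circ> c)"
    using r by (auto simp: pathstart_def pathfinish_def)
  have Q1: "path_equiv M (\<psi> \<circ> p) ((\<psi> \<circ> \<alpha>) +++ ((\<psi> \<circ> c) +++ (reversepath (\<psi> \<circ> c) +++ (\<psi> \<circ> \<beta>))))"
    using push_path_equiv[OF assms(1,2) r(9)] by (simp add: comp_join comp_rev)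
  have Q2: "path_equiv M (\<psi> \<circ> q) ((\<psi> \<circ> \<alpha>) +++ (\<psi> \<circ> \<beta>))"
    using push_path_equiv[OF assms(1,2) r(10)] by (simp add: comp_join)
  show ?thesis unfolding retrace_step_def
    apply (rule exI[of _ "\<psi> \<circ> \<alpha>"], rule exI[of _ "\<psi> \<circ> c"], rule exI[of _ "\<psi> \<circ> \<beta>"])
    using P E Q1 Q2 by simp
qed

lemma push_retrace:
  assumes "continuous_on T \<psi>" "\<psi> ` T \<subseteq> M" "retrace_equiv T p q"
  shows "retrace_equiv M (\<psi> \<circ> p) (\<psi> \<circ> q)"
  using assms(3) unfolding retrace_equiv_def
proof (induction rule: rtranclp_induct)
  case base then show ?case by simp
next
  case (step y z)
  have "retrace_equiv M (\<psi> \<circ> y) (\<psi> \<circ> z)"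
    using step(2) push_path_equiv[OF assms(1,2)] push_step[OF assms(1,2)]
      retrace_of_path_equiv retrace_of_step unfolding retrace_equiv_def by blast
  then show ?case using step(3) unfolding retrace_equiv_def by (rule rtranclp_trans[rotated])
qed

lemma path_equiv_cong:
  assumes "path q" "path_image q \<subseteq> M" "\<And>t. t \<in> {0..1} \<Longrightarrow> p t = q t"
  shows "path_equiv M p q"
proof -
  have "path p" unfolding path_def
    by (rule continuous_on_eq[OF assms(1)[unfolded path_def]]) (simp add: assms(3))
  moreover have "path_image p = path_image q" using assms(3) by (auto simp: path_image_def)
  moreover have "reparam_of p q" using assms(3) by (intro reparam_ofI[of id]) (auto simp: mono_on_def)
  ultimately show ?thesis using assms by (intro path_equiv_reparam) auto
qed

section \<open>Chains along a path\<close>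

lemma chain_append:
  assumes "chain T m q1"
  shows "chain T n q2 \<Longrightarrow> pathfinish q1 = pathstart q2 \<Longrightarrow> \<exists>q. chain T (m+n) q \<and> path_equiv T (q1 +++ q2) q"
  using assms
proof (induction arbitrary: q2 rule: chain.induct)
  case (chain0 x)
  have "path_equiv T ((\<lambda>_. x) +++ q2) q2"
    using chain_path[OF chain0.prems(1)] chain0.prems(2) by (intro path_equiv_const_left) (auto simp: pathfinish_def)
  then show ?case using chain0.prems(1) by auto
next
  case (chainS g n' q)
  have pq: "path q" "path_image q \<subseteq> T" using chain_path[OF chainS.hyps(3)] by auto
  have pq2: "path q2" "path_image q2 \<subseteq> T" using chain_path[OF chainS.prems(1)] by auto
  have fe: "pathfinish q = pathstart q2" using chainS.prems(2) chainS.hyps(4) by simp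
  obtain q' where q': "chain T (n'+n) q'" "path_equiv T (q +++ q2) q'"
    using chainS.IH[OF chainS.prems(1) fe] by blast
  have pg: "path g" using chainS.hyps(1) arc_imp_path by auto
  have X1: "path_equiv T ((g +++ q) +++ q2) (g +++ (q +++ q2))"
    using pg pq pq2 chainS.hyps(2,4) fe by (intro path_equiv_sym[OF path_equiv_assoc]) auto
  have X2: "path_equiv T (g +++ (q +++ q2)) (g +++ q')"
    using q'(2) pg chainS.hyps(2,4) by (intro path_equiv_join_right) auto
  have "pathstart q' = pathstart q" using path_equiv_ends[OF q'(2)] by simp
  then have X3: "chain T (Suc (n'+n)) (g +++ q')"
    using chainS.hyps(1,2,4) q'(1) by (intro chain.chainS) auto
  show ?case using X3 path_equiv_trans[OF X1 X2] by auto
qed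

locale goodctx =
  fixes T :: "'t::t2_space set" and \<phi> :: "real \<Rightarrow> 't" and a b :: real
  assumes cont: "continuous_on {a..b} \<phi>" and img: "\<phi> ` {a..b} \<subseteq> T"
begin

definition good :: "real \<Rightarrow> real \<Rightarrow> bool" where
  "good u v \<longleftrightarrow> (\<exists>m q. chain T m q \<and> path_equiv T (spath u v \<phi>) q)"

lemma sp_facts:
  assumes "a \<le> u" "u \<le> v" "v \<le> b"
  shows "path (spath u v \<phi>)" "path_image (spath u v \<phi>) \<subseteq> T"
proof -
  show "path (spath u v \<phi>)" using assms
    by (intro path_spath_gen) (auto intro: continuous_on_subset[OF cont])
  show "path_image (spath u v \<phi>) \<subseteq> T" using assms img by (auto simp: path_image_spath_le)
qed

lemma good_refl:
  assumes "a \<le> u" "u \<le> b"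
  shows "good u u"
proof -
  have "\<phi> u \<in> T" using img assms by auto
  then have "chain T 0 (\<lambda>_. \<phi> u)" by (rule chain0)
  then show ?thesis unfolding good_def spath_const using path_equiv_refl by blast
qed

lemma good_inj:
  assumes "a \<le> u" "u < v" "v \<le> b" "inj_on \<phi> {u..v}"
  shows "good u v"
proof -
  have ar: "arc (spath u v \<phi>)" using assms
    by (intro arc_spath_gen) (auto intro: continuous_on_subset[OF cont])
  have sp: "path (spath u v \<phi>)" "path_image (spath u v \<phi>) \<subseteq> T" using sp_facts assms by auto
  have "\<phi> v \<in> T" using img assms by auto
  then have "chain T (Suc 0) (spath u v \<phi> +++ (\<lambda>_. \<phi> v))"
    using ar sp by (intro chainS chain0) (auto simp: pathstart_def)
  moreover have "path_equiv T (spath u v \<phi>) (spath u v \<phi> +++ (\<lambda>_. \<phi> v))"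
    using sp by (intro path_equiv_sym[OF path_equiv_const_right]) auto
  ultimately show ?thesis unfolding good_def by blast
qed

lemma good_trans:
  assumes "a \<le> u" "u \<le> w" "w \<le> v" "v \<le> b" "good u w" "good w v"
  shows "good u v"
proof (cases "u = w \<or> w = v")
  case True then show ?thesis using assms by auto
next
  case False
  then have uw: "u < w" "w < v" using assms by auto
  obtain m1 q1 where q1: "chain T m1 q1" "path_equiv T (spath u w \<phi>) q1" using assms(5) good_def by auto
  obtain m2 q2 where q2: "chain T m2 q2" "path_equiv T (spath w v \<phi>) q2" using assms(6) good_def by auto
  have s1: "path (spath u w \<phi>)" "path_image (spath u w \<phi>) \<subseteq> T" using sp_facts assms by auto
  have s2: "path (spath w v \<phi>)" "path_image (spath w v \<phi>) \<subseteq> T" using sp_facts assms by auto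
  have s3: "path (spath u v \<phi>)" "path_image (spath u v \<phi>) \<subseteq> T" using sp_facts assms by auto
  have e1: "pathstart q1 = \<phi> u" "pathfinish q1 = \<phi> w" using path_equiv_ends[OF q1(2)] by auto
  have e2: "pathstart q2 = \<phi> w" "pathfinish q2 = \<phi> v" using path_equiv_ends[OF q2(2)] by auto
  have cq1: "path q1" "path_image q1 \<subseteq> T" using chain_path[OF q1(1)] by auto
  have cq2: "path q2" "path_image q2 \<subseteq> T" using chain_path[OF q2(1)] by auto
  have A: "path_equiv T (spath u v \<phi>) (spath u w \<phi> +++ spath w v \<phi>)"
    using s1 s2 s3 uw by (intro path_equiv_reparam reparam_split) (auto simp: path_image_join)
  have B: "path_equiv T (spath u w \<phi> +++ spath w v \<phi>) (q1 +++ spath w v \<phi>)"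
    using q1(2) s2 by (intro path_equiv_join_left) auto
  have C: "path_equiv T (q1 +++ spath w v \<phi>) (q1 +++ q2)"
    using q2(2) cq1 e1 by (intro path_equiv_join_right) auto
  obtain q where q: "chain T (m1+m2) q" "path_equiv T (q1 +++ q2) q"
    using chain_append[OF q1(1) q2(1)] e1 e2 by auto
  show ?thesis unfolding good_def
    using path_equiv_trans[OF A path_equiv_trans[OF B path_equiv_trans[OF C q(2)]]] q(1) by blast
qed

lemma good_piece:
  assumes st: "a \<le> s" "s < t" "t \<le> b"
    and loc: "\<And>x. x \<in> {s..t} \<Longrightarrow> \<exists>\<delta>>0. inj_on \<phi> (ball x \<delta> \<inter> {s..t})"
  shows "good s t"
proof -
  have "\<forall>x\<in>{s..t}. \<exists>\<delta>. \<delta> > 0 \<and> inj_on \<phi> (ball x \<delta> \<inter> {s..t})" using loc by blast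
  from bchoice[OF this] obtain D where D0: "\<forall>x\<in>{s..t}. D x > 0 \<and> inj_on \<phi> (ball x (D x) \<inter> {s..t})"
    by blast
  then have D: "\<And>x. x \<in> {s..t} \<Longrightarrow> D x > 0 \<and> inj_on \<phi> (ball x (D x) \<inter> {s..t})" by blast
  have Cne: "(\<lambda>x. ball x (D x)) ` {s..t} \<noteq> {}" using st by auto
  have cov: "{s..t} \<subseteq> \<Union>((\<lambda>x. ball x (D x)) ` {s..t})"
  proof
    fix x assume "x \<in> {s..t}"
    then show "x \<in> \<Union>((\<lambda>x. ball x (D x)) ` {s..t})" using D[of x] by force
  qed
  have ope: "\<And>B. B \<in> (\<lambda>x. ball x (D x)) ` {s..t} \<Longrightarrow> open B" by auto
  obtain e where e: "e > 0" "\<And>U. U \<subseteq> {s..t} \<Longrightarrow> diameter U < e \<Longrightarrow> \<exists>B \<in> (\<lambda>x. ball x (D x)) ` {s..t}. U \<subseteq> B"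
    using Lebesgue_number_lemma[OF compact_Icc Cne cov ope] by blast
  have small: "good u v" if uv: "s \<le> u" "u < v" "v \<le> t" "v - u < e" for u v
  proof -
    have "diameter {u..v} < e" using uv by auto
    then obtain x where x: "x \<in> {s..t}" "{u..v} \<subseteq> ball x (D x)" using e(2)[of "{u..v}"] uv by auto
    have "inj_on \<phi> {u..v}" using D[OF x(1)] x(2) uv by (auto intro: inj_on_subset)
    then show ?thesis using uv st by (intro good_inj) auto
  qed
  have ind: "\<And>u. s \<le> u \<Longrightarrow> u \<le> t \<Longrightarrow> t - u \<le> real n * (e/2) \<Longrightarrow> good u t" for n
  proof (induction n)
    case 0
    then have "u = t" by auto
    then show ?case using good_refl st by auto
  next
    case (Suc n)
    show ?case
    proof (cases "t - u < e")
      case True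
      then show ?thesis using Suc.prems small st good_refl by (cases "u = t") auto
    next
      case False
      define w where "w = u + e/2"
      have w: "u < w" "w \<le> t" "t - w \<le> real n * (e/2)" using False e(1) Suc.prems
        by (auto simp: w_def algebra_simps)
      have "good w t" using Suc.IH[of w] w Suc.prems by auto
      moreover have "good u w" using small[of u w] w Suc.prems e(1) by (auto simp: w_def)
      ultimately show ?thesis using good_trans[of u w t] w Suc.prems st by auto
    qed
  qed
  obtain n :: nat where "(t - s) / (e/2) \<le> real n" using real_arch_simple by blast
  then have "t - s \<le> real n * (e/2)" using e(1) by (simp add: field_simps)
  then show ?thesis using ind[of s n] st by auto
qed

end


theorem lemma3p2:
  fixes M :: "'m::topological_space set"
    and A :: "(('m \<Rightarrow> 'e::euclidean_space) \<times> 'm set) set"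
    and T :: "'t::metric_space set"
    and \<gamma> :: "real \<Rightarrow> 'm"
    and a b :: real
  assumes "smooth_manifold M A"
    and "a < b"
    and "tree_like_via T M a b \<gamma>"
    and "piecewise_smooth_immersion M A a b \<gamma>"
  shows "retraceable M a b \<gamma>"
proof -
  note man = assms(1)
  have rt: "is_rtree T" using assms(3) unfolding tree_like_via_def by (elim conjE)
  obtain \<phi> \<psi> where tl: "continuous_on {a..b} \<phi>" "\<phi> ` {a..b} \<subseteq> T"
       "continuous_on T \<psi>" "\<psi> ` T \<subseteq> M" "\<forall>t\<in>{a..b}. \<gamma> t = \<psi> (\<phi> t)" "\<phi> a = \<phi> b"
    apply (insert assms(3)[unfolded tree_like_via_def, THEN conjunct2])
    apply (elim exE conjE)
    apply (rule that)
         apply assumption+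
    done
  have U: "uarc T" using rt unfolding is_rtree_def uarc_def by (elim conjE)
  obtain k t where kt: "k \<ge> 1" "t 0 = a" "t k = b"
      "\<forall>i<k. t i < t (Suc i) \<and> smooth_immersion_on M A (t i) (t (Suc i)) \<gamma>"
    apply (insert assms(4)[unfolded piecewise_smooth_immersion_def])
    apply (elim exE conjE)
    apply (rule that)
       apply assumption+
    done
  have mono: "\<And>i. i \<le> j \<Longrightarrow> j \<le> k \<Longrightarrow> t i \<le> t j" for j
  proof (induction j)
    case 0 then show ?case by simp
  next
    case (Suc j)
    show ?case
    proof (cases "i = Suc j")
      case True then show ?thesis by simp
    next
      case False
      then have "i \<le> j" using Suc.prems by auto
      then have "t i \<le> t j" using Suc.IH Suc.prems by auto
      moreover have "t j < t (Suc j)" using kt(4) Suc.prems by auto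
      ultimately show ?thesis by simp
    qed
  qed
  interpret G: goodctx T \<phi> a b using tl(1,2) by unfold_locales
  have piece: "G.good (t i) (t (Suc i))" if i: "i < k" for i
  proof -
    have imm: "smooth_immersion_on M A (t i) (t (Suc i)) \<gamma>" and lt: "t i < t (Suc i)" using kt(4) i by auto
    have ai: "a \<le> t i" using mono[of 0 i] i kt(2) by auto
    have bi: "t (Suc i) \<le> b" using mono[of "Suc i" k] i kt(3) by auto
    show ?thesis
    proof (rule G.good_piece[OF ai lt bi])
      fix x assume x: "x \<in> {t i..t (Suc i)}"
      obtain \<delta> where d: "\<delta> > 0" "inj_on \<gamma> (ball x \<delta> \<inter> {t i..t (Suc i)})"
        using immersion_locally_inj[OF man imm x] by blast
      have "inj_on \<phi> (ball x \<delta> \<inter> {t i..t (Suc i)})"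
      proof (rule inj_onI)
        fix y z assume yz: "y \<in> ball x \<delta> \<inter> {t i..t (Suc i)}" "z \<in> ball x \<delta> \<inter> {t i..t (Suc i)}" "\<phi> y = \<phi> z"
        have "y \<in> {a..b}" "z \<in> {a..b}" using yz ai bi by auto
        then have "\<gamma> y = \<gamma> z" using tl(5) yz(3) by simp
        then show "y = z" using inj_onD[OF d(2)] yz by blast
      qed
      then show "\<exists>\<delta>>0. inj_on \<phi> (ball x \<delta> \<inter> {t i..t (Suc i)})" using d(1) by blast
    qed
  qed
  have all: "i \<le> k \<Longrightarrow> G.good (t 0) (t i)" for i
  proof (induction i)
    case 0 then show ?case using G.good_refl[of "t 0"] kt(2) assms(2) by auto
  next
    case (Suc i)
    have "G.good (t 0) (t i)" using Suc by auto
    moreover have "G.good (t i) (t (Suc i))" using piece Suc.prems by auto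
    moreover have "a \<le> t 0" "t 0 \<le> t i" "t i \<le> t (Suc i)" "t (Suc i) \<le> b"
      using mono[of 0 i] mono[of i "Suc i"] mono[of "Suc i" k] Suc.prems kt(2,3) by auto
    ultimately show ?case using G.good_trans by blast
  qed
  have "G.good a b" using all[of k] kt(2,3) by simp
  then obtain m q where q: "chain T m q" "path_equiv T (spath a b \<phi>) q" unfolding G.good_def by blast
  have qe: "pathstart q = \<phi> a" "pathfinish q = \<phi> b" using path_equiv_ends[OF q(2)] by auto
  have "retrace_equiv T q (\<lambda>_. pathstart q)" using chain_loop[OF U q(1)] qe tl(6) by simp
  then have R: "retrace_equiv T (spath a b \<phi>) (\<lambda>_. \<phi> a)"
    using retrace_trans[OF retrace_of_path_equiv[OF q(2)]] qe by simp
  have R2: "retrace_equiv M (\<psi> \<circ> spath a b \<phi>) (\<lambda>_. \<psi> (\<phi> a))"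
    using push_retrace[OF tl(3,4) R] by (simp add: comp_def)
  have sp: "path (spath a b \<phi>)" "path_image (spath a b \<phi>) \<subseteq> T" using G.sp_facts assms(2) by auto
  have pp: "path (\<psi> \<circ> spath a b \<phi>) \<and> path_image (\<psi> \<circ> spath a b \<phi>) \<subseteq> M"
    using push_path[OF tl(3,4) sp] .
  have E: "path_equiv M (\<lambda>s. \<gamma> (a + s * (b - a))) (\<psi> \<circ> spath a b \<phi>)"
  proof (rule path_equiv_cong)
    show "path (\<psi> \<circ> spath a b \<phi>)" "path_image (\<psi> \<circ> spath a b \<phi>) \<subseteq> M" using pp by auto
    fix s :: real assume s: "s \<in> {0..1}"
    have "s * (b - a) \<le> 1 * (b - a)" using s assms(2) by (intro mult_right_mono) auto
    moreover have "0 \<le> s * (b - a)" using s assms(2) by auto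
    ultimately have "a + s * (b - a) \<in> {a..b}" by auto
    then have "\<gamma> (a + s * (b - a)) = \<psi> (\<phi> (a + s * (b - a)))" using tl(5) by blast
    moreover have "(\<psi> \<circ> spath a b \<phi>) s = \<psi> (\<phi> (a + s * (b - a)))"
      unfolding spath_def o_def by (simp add: algebra_simps)
    ultimately show "\<gamma> (a + s * (b - a)) = (\<psi> \<circ> spath a b \<phi>) s" by simp
  qed
  have "\<phi> a \<in> T" using tl(2) assms(2) by auto
  then have "\<psi> (\<phi> a) \<in> M" using tl(4) by auto
  then show ?thesis unfolding retraceable_def
    using retrace_trans[OF retrace_of_path_equiv[OF E] R2] by blast
qed


end
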